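(* Let $V$ be an upper probability on $(\Omega,\mathcal{F})$ and $\theta:\Omega\to\Omega$ a measurable map preserving $V$. Consider the statements: (i) $\theta$ is ergodic with respect to $V$; (ii) every bounded measurable $\xi:\Omega\to\mathbb{R}$ with $\xi(\theta\omega)=\xi(\omega)$ for all $\omega$ is constant quasi-surely; (iii) every measurable $\xi:\Omega\to\mathbb{R}$ with $\xi\circ\theta=\xi$ quasi-surely is constant quasi-surely. Then (iii) implies (ii) and (ii) implies (i). Moreover, if $V$ is continuous from below, then (ii) and (i) are equivalent; if $V$ is continuous, all three statements are equivalent.
   Context: An upper probability is $V(A)=\sup_{P\in\mathcal{P}}P(A)$ for a nonempty set $\mathcal{P}$ of finitely additive probabilities on $\mathcal{F}$. $\theta$ preserves $V$ if $V(\theta^{-1}A)=V(A)$ for all $A\in\mathcal{F}$. $V$ is continuous from below if $V(A_n)\to V(A)$ for $A_n\uparrow A$, and continuous if also $V(A_n)\to V(A)$ for $A_n\downarrow A$. A statement holds quasi-surely if it holds outside a set $A$ with $V(A)=0$; "$\xi$ is constant quasi-surely" means there is $c\in\mathbb{R}$ with $V(\{\xi\ne c\})=0$. $\theta$ is ergodic with respect to $V$ if for every $B\in\mathcal{F}$ with $\theta^{-1}B=B$: $V(B)\in\{0,1\}$, and $V(B)=0$ or $V(B^c)=0$. *)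

theory Defs
  imports "HOL-Analysis.Analysis"
begin

text \<open>Finitely additive probability on the sigma-algebra sets M (values off sets M irrelevant).\<close>
definition fa_prob :: "'a measure \<Rightarrow> ('a set \<Rightarrow> real) \<Rightarrow> bool" where
  "fa_prob M P \<longleftrightarrow>
     (\<forall>A\<in>sets M. 0 \<le> P A) \<and> P (space M) = 1 \<and>
     (\<forall>A\<in>sets M. \<forall>B\<in>sets M. A \<inter> B = {} \<longrightarrow> P (A \<union> B) = P A + P B)"

definition upper_prob :: "('a set \<Rightarrow> real) set \<Rightarrow> 'a set \<Rightarrow> real" where
  "upper_prob \<P> A = (SUP P\<in>\<P>. P A)"

definition preserves :: "'a measure \<Rightarrow> ('a set \<Rightarrow> real) \<Rightarrow> ('a \<Rightarrow> 'a) \<Rightarrow> bool" where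
  "preserves M V \<theta> \<longleftrightarrow> (\<forall>A\<in>sets M. V (\<theta> -` A \<inter> space M) = V A)"

definition cont_from_below :: "'a measure \<Rightarrow> ('a set \<Rightarrow> real) \<Rightarrow> bool" where
  "cont_from_below M V \<longleftrightarrow>
     (\<forall>A :: nat \<Rightarrow> 'a set. range A \<subseteq> sets M \<longrightarrow> incseq A \<longrightarrow>
        (\<lambda>n. V (A n)) \<longlonglongrightarrow> V (\<Union>n. A n))"

definition cont_from_above :: "'a measure \<Rightarrow> ('a set \<Rightarrow> real) \<Rightarrow> bool" where
  "cont_from_above M V \<longleftrightarrow>
     (\<forall>A :: nat \<Rightarrow> 'a set. range A \<subseteq> sets M \<longrightarrow> decseq A \<longrightarrow>
        (\<lambda>n. V (A n)) \<longlonglongrightarrow> V (\<Inter>n. A n))"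

definition continuous_cap :: "'a measure \<Rightarrow> ('a set \<Rightarrow> real) \<Rightarrow> bool" where
  "continuous_cap M V \<longleftrightarrow> cont_from_below M V \<and> cont_from_above M V"

definition quasi_surely :: "'a measure \<Rightarrow> ('a set \<Rightarrow> real) \<Rightarrow> ('a \<Rightarrow> bool) \<Rightarrow> bool" where
  "quasi_surely M V Q \<longleftrightarrow> (\<exists>A\<in>sets M. V A = 0 \<and> (\<forall>\<omega>\<in>space M - A. Q \<omega>))"

definition const_qs :: "'a measure \<Rightarrow> ('a set \<Rightarrow> real) \<Rightarrow> ('a \<Rightarrow> real) \<Rightarrow> bool" where
  "const_qs M V \<xi> \<longleftrightarrow> (\<exists>c::real. V {\<omega>\<in>space M. \<xi> \<omega> \<noteq> c} = 0)"

definition ergodic_cap :: "'a measure \<Rightarrow> ('a set \<Rightarrow> real) \<Rightarrow> ('a \<Rightarrow> 'a) \<Rightarrow> bool" where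
  "ergodic_cap M V \<theta> \<longleftrightarrow>
     (\<forall>B\<in>sets M. \<theta> -` B \<inter> space M = B \<longrightarrow>
        (V B = 0 \<or> V B = 1) \<and> (V B = 0 \<or> V (space M - B) = 0))"

end

theory Submission
  imports Defs
begin

lemma aux_set: "{\<omega>\<in>S. \<exists>k::nat. \<forall>n\<ge>k. P n \<omega>} = (\<Union>k. \<Inter>n. {\<omega>\<in>S. k \<le> n \<longrightarrow> P n \<omega>})"
  by auto

locale UP =
  fixes M :: "'a measure" and Ps :: "('a set \<Rightarrow> real) set"
  assumes ne: "Ps \<noteq> {}" and fa: "\<forall>P\<in>Ps. fa_prob M P"
begin

abbreviation "Vu \<equiv> upper_prob Ps"

lemma P_add: "P \<in> Ps \<Longrightarrow> A \<in> sets M \<Longrightarrow> B \<in> sets M \<Longrightarrow> A \<inter> B = {} \<Longrightarrow> P (A \<union> B) = P A + P B"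
  using fa unfolding fa_prob_def by blast
lemma P_nn: "P \<in> Ps \<Longrightarrow> A \<in> sets M \<Longrightarrow> 0 \<le> P A"
  using fa unfolding fa_prob_def by blast
lemma P_sp: "P \<in> Ps \<Longrightarrow> P (space M) = 1"
  using fa unfolding fa_prob_def by blast

lemma P_mono: assumes "P \<in> Ps" "A \<in> sets M" "B \<in> sets M" "A \<subseteq> B" shows "P A \<le> P B"
proof -
  have "B = A \<union> (B - A)" using assms by blast
  hence "P B = P A + P (B - A)" using P_add[of P A "B - A"] assms by auto
  thus ?thesis using P_nn[of P "B - A"] assms by auto
qed

lemma P_le1: "P \<in> Ps \<Longrightarrow> A \<in> sets M \<Longrightarrow> P A \<le> 1"
  using P_mono[of P A "space M"] P_sp sets.sets_into_space by (metis sets.top)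

lemma P_un: assumes "P \<in> Ps" "A \<in> sets M" "B \<in> sets M" shows "P (A \<union> B) \<le> P A + P B"
proof -
  have "A \<union> B = A \<union> (B - A)" by blast
  hence "P (A \<union> B) = P A + P (B - A)" using P_add[of P A "B - A"] assms by auto
  thus ?thesis using P_mono[of P "B - A" B] assms by auto
qed

lemma bdd: "A \<in> sets M \<Longrightarrow> bdd_above ((\<lambda>P. P A) ` Ps)"
  by (rule bdd_aboveI[where M=1]) (auto intro: P_le1)

lemma V_ge: "P \<in> Ps \<Longrightarrow> A \<in> sets M \<Longrightarrow> P A \<le> Vu A"
  unfolding upper_prob_def using bdd by (intro cSUP_upper) auto

lemma V_le: "(\<And>P. P \<in> Ps \<Longrightarrow> P A \<le> c) \<Longrightarrow> Vu A \<le> c"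
  unfolding upper_prob_def using ne by (rule cSUP_least)

lemma V_nn: "A \<in> sets M \<Longrightarrow> 0 \<le> Vu A"
  using ne V_ge P_nn by (meson all_not_in_conv order_trans)

lemma V_mono: "A \<in> sets M \<Longrightarrow> B \<in> sets M \<Longrightarrow> A \<subseteq> B \<Longrightarrow> Vu A \<le> Vu B"
  by (rule V_le) (meson P_mono V_ge order_trans)

lemma V_un: assumes "A \<in> sets M" "B \<in> sets M" shows "Vu (A \<union> B) \<le> Vu A + Vu B"
  by (rule V_le) (smt (verit) P_un V_ge assms)

lemma V_sp: "Vu (space M) = 1"
proof -
  have "(SUP P\<in>Ps. P (space M)) = (SUP P\<in>Ps. (1::real))" using P_sp by (intro SUP_cong) auto
  thus ?thesis unfolding upper_prob_def using ne by simp
qed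

lemma V_empty: "Vu {} = 0"
proof -
  have "P {} = 0" if "P \<in> Ps" for P using P_add[OF that, of "{}" "{}"] by simp
  hence "(SUP P\<in>Ps. P {}) = (SUP P\<in>Ps. (0::real))" by (intro SUP_cong) auto
  thus ?thesis unfolding upper_prob_def using ne by simp
qed

lemma V_null_un: "A \<in> sets M \<Longrightarrow> B \<in> sets M \<Longrightarrow> Vu A = 0 \<Longrightarrow> Vu B = 0 \<Longrightarrow> Vu (A \<union> B) = 0"
  using V_un V_nn by (smt (verit) sets.Un)

lemma V_null_sub: "A \<in> sets M \<Longrightarrow> B \<in> sets M \<Longrightarrow> A \<subseteq> B \<Longrightarrow> Vu B = 0 \<Longrightarrow> Vu A = 0"
  using V_mono V_nn by (smt (verit))

lemma null_UN:
  assumes cb: "cont_from_below M Vu" and A: "range (A::nat \<Rightarrow> 'a set) \<subseteq> sets M" and z: "\<And>n. Vu (A n) = 0"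
  shows "Vu (\<Union>n. A n) = 0"
proof -
  define B where "B n = (\<Union>i\<le>n. A i)" for n
  have Bs: "range B \<subseteq> sets M" using A unfolding B_def by auto
  have inc: "incseq B" unfolding B_def incseq_def by (auto intro: le_trans)
  have Bz: "Vu (B n) = 0" for n
  proof (induction n)
    case 0 then show ?case using z by (simp add: B_def)
  next
    case (Suc n)
    have "B (Suc n) = B n \<union> A (Suc n)" unfolding B_def by (auto simp: atMost_Suc)
    then show ?case using V_null_un[of "B n" "A (Suc n)"] Suc Bs A z by auto
  qed
  have "(\<lambda>n. Vu (B n)) \<longlonglongrightarrow> Vu (\<Union>n. B n)" using cb Bs inc unfolding cont_from_below_def by blast
  hence "Vu (\<Union>n. B n) = 0" using Bz LIMSEQ_unique[OF _ tendsto_const] by simp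
  moreover have "(\<Union>n. B n) = (\<Union>n. A n)" unfolding B_def by auto
  ultimately show ?thesis by simp
qed


lemma const_from_dich:
  assumes cb: "cont_from_below M Vu" and xi: "\<xi> \<in> borel_measurable M"
    and dich: "\<And>t. Vu {\<omega>\<in>space M. \<xi> \<omega> \<le> t} = 0 \<or> Vu {\<omega>\<in>space M. t < \<xi> \<omega>} = 0"
  shows "const_qs M Vu \<xi>"
proof -
  define L where "L t = {\<omega>\<in>space M. \<xi> \<omega> \<le> t}" for t
  define G where "G t = {\<omega>\<in>space M. t < \<xi> \<omega>}" for t
  have Ls: "L t \<in> sets M" for t unfolding L_def using xi by measurable
  have Gs: "G t \<in> sets M" for t unfolding G_def using xi by measurable
  define S where "S = {t. Vu (G t) = 0}"
  have up: "t \<in> S" if "s \<in> S" "s \<le> t" for s t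
  proof -
    have "G t \<subseteq> G s" using that unfolding G_def by auto
    thus ?thesis using that V_null_sub[OF Gs Gs] unfolding S_def by auto
  qed
  have Sne: "S \<noteq> {}"
  proof
    assume "S = {}"
    hence z: "Vu (L t) = 0" for t using dich[of t] unfolding S_def L_def G_def by auto
    have "Vu (\<Union>n. L (real n)) = 0" using null_UN[OF cb, of "\<lambda>n. L (real n)"] Ls z by auto
    moreover have "(\<Union>n. L (real n)) = space M" unfolding L_def using real_arch_simple by fastforce
    ultimately show False using V_sp by simp
  qed
  have Sbdd: "bdd_below S"
  proof (rule ccontr)
    assume nb: "\<not> bdd_below S"
    have z: "Vu (G (- real n)) = 0" for n
    proof -
      from nb obtain s where "s \<in> S" "s < - real n" unfolding bdd_below_def by (meson not_le)
      thus ?thesis using up[of s "- real n"] unfolding S_def by auto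
    qed
    have "Vu (\<Union>n. G (- real n)) = 0" using null_UN[OF cb, of "\<lambda>n. G (- real n)"] Gs z by auto
    moreover have "(\<Union>n. G (- real n)) = space M" unfolding G_def
    proof (auto)
      fix x assume "x \<in> space M"
      obtain n where "- \<xi> x < real n" using reals_Archimedean2 by blast
      thus "\<exists>n. - real n < \<xi> x" by (intro exI[of _ n]) linarith
    qed
    ultimately show False using V_sp by simp
  qed
  define c where "c = Inf S"
  have zG: "Vu (G (c + inverse (real (Suc n)))) = 0" for n
  proof -
    have "c < c + inverse (real (Suc n))" by simp
    then obtain s where "s \<in> S" "s < c + inverse (real (Suc n))"
      using cInf_lessD[OF Sne] unfolding c_def by blast
    thus ?thesis using up unfolding S_def by force
  qed
  have zL: "Vu (L (c - inverse (real (Suc n)))) = 0" for n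
  proof -
    have "c - inverse (real (Suc n)) \<notin> S"
    proof
      assume "c - inverse (real (Suc n)) \<in> S"
      hence "c \<le> c - inverse (real (Suc n))" unfolding c_def using cInf_lower[OF _ Sbdd] by blast
      thus False by simp
    qed
    thus ?thesis using dich[of "c - inverse (real (Suc n))"] unfolding S_def L_def G_def by auto
  qed
  have "Vu (\<Union>n. G (c + inverse (real (Suc n)))) = 0" using null_UN[OF cb, of "\<lambda>n. G (c + inverse (real (Suc n)))"] Gs zG by auto
  moreover have "(\<Union>n. G (c + inverse (real (Suc n)))) = {\<omega>\<in>space M. c < \<xi> \<omega>}" unfolding G_def
  proof (auto)
    fix x assume "c < \<xi> x"
    then obtain n where "inverse (real (Suc n)) < \<xi> x - c" using reals_Archimedean[of "\<xi> x - c"] by auto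
    thus "\<exists>n. c + inverse (1 + real n) < \<xi> x" by (intro exI[of _ n]) auto
  next
    fix x n assume "c + inverse (1 + real n) < \<xi> x"
    moreover have "0 < inverse (1 + real n)" by simp
    ultimately show "c < \<xi> x" by linarith
  qed
  moreover have "Vu (\<Union>n. L (c - inverse (real (Suc n)))) = 0" using null_UN[OF cb, of "\<lambda>n. L (c - inverse (real (Suc n)))"] Ls zL by auto
  moreover have "(\<Union>n. L (c - inverse (real (Suc n)))) = {\<omega>\<in>space M. \<xi> \<omega> < c}" unfolding L_def
  proof (auto)
    fix x assume "\<xi> x < c"
    then obtain n where "inverse (real (Suc n)) < c - \<xi> x" using reals_Archimedean[of "c - \<xi> x"] by auto
    thus "\<exists>n. \<xi> x \<le> c - inverse (1 + real n)" by (intro exI[of _ n]) auto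
  next
    fix x n assume "\<xi> x \<le> c - inverse (1 + real n)"
    moreover have "0 < inverse (1 + real n)" by simp
    ultimately show "\<xi> x < c" by linarith
  qed
  moreover have "{\<omega>\<in>space M. \<xi> \<omega> \<noteq> c} = {\<omega>\<in>space M. \<xi> \<omega> < c} \<union> {\<omega>\<in>space M. c < \<xi> \<omega>}" by auto
  moreover have "{\<omega>\<in>space M. \<xi> \<omega> < c} \<in> sets M" "{\<omega>\<in>space M. c < \<xi> \<omega>} \<in> sets M" using xi by measurable
  ultimately have "Vu {\<omega>\<in>space M. \<xi> \<omega> \<noteq> c} = 0" using V_null_un[of "{\<omega>\<in>space M. \<xi> \<omega> < c}" "{\<omega>\<in>space M. c < \<xi> \<omega>}"] by simp
  thus ?thesis unfolding const_qs_def by blast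
qed


lemma V_compl: assumes "A \<in> sets M" "Vu (space M - A) = 0" shows "Vu A = 1"
proof -
  obtain P0 where P0: "P0 \<in> Ps" using ne by blast
  have "Vu A \<le> 1" using assms P_le1 by (intro V_le) auto
  moreover have "P0 (space M) = P0 A + P0 (space M - A)"
    using P_add[OF P0 assms(1), of "space M - A"] sets.sets_into_space[OF assms(1)]
    by (metis Diff_disjoint Un_Diff_cancel sets.compl_sets assms(1) sup.absorb2)
  moreover have "P0 (space M - A) \<le> 0" using V_ge[OF P0, of "space M - A"] assms by auto
  moreover have "P0 A \<le> Vu A" using V_ge[OF P0 assms(1)] .
  ultimately show ?thesis using P_sp[OF P0] by linarith
qed

lemma II_to_I:
  assumes II: "\<forall>\<xi> \<in> borel_measurable M. (\<exists>K. \<forall>\<omega>\<in>space M. \<bar>\<xi> \<omega>\<bar> \<le> K) \<longrightarrow>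
                   (\<forall>\<omega>\<in>space M. \<xi> (\<theta> \<omega>) = \<xi> \<omega>) \<longrightarrow> const_qs M Vu \<xi>"
  shows "ergodic_cap M Vu \<theta>"
  unfolding ergodic_cap_def
proof (intro ballI impI)
  fix B assume B: "B \<in> sets M" and inv: "\<theta> -` B \<inter> space M = B"
  have Bsp: "B \<subseteq> space M" using B sets.sets_into_space by auto
  define \<xi> :: "'a \<Rightarrow> real" where "\<xi> = indicator B"
  have "\<xi> \<in> borel_measurable M" unfolding \<xi>_def using B by simp
  moreover have "\<exists>K. \<forall>\<omega>\<in>space M. \<bar>\<xi> \<omega>\<bar> \<le> K" unfolding \<xi>_def by (intro exI[of _ 1]) (auto simp: indicator_def)
  moreover have "\<forall>\<omega>\<in>space M. \<xi> (\<theta> \<omega>) = \<xi> \<omega>"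
  proof
    fix \<omega> assume "\<omega> \<in> space M"
    hence "\<theta> \<omega> \<in> B \<longleftrightarrow> \<omega> \<in> B" using inv by blast
    thus "\<xi> (\<theta> \<omega>) = \<xi> \<omega>" unfolding \<xi>_def by (simp add: indicator_def)
  qed
  ultimately have "const_qs M Vu \<xi>" using II by blast
  then obtain c where c: "Vu {\<omega>\<in>space M. \<xi> \<omega> \<noteq> c} = 0" unfolding const_qs_def by blast
  consider "c = 0" | "c = 1" | "c \<noteq> 0" "c \<noteq> 1" by blast
  thus "(Vu B = 0 \<or> Vu B = 1) \<and> (Vu B = 0 \<or> Vu (space M - B) = 0)"
  proof cases
    case 1
    hence "{\<omega>\<in>space M. \<xi> \<omega> \<noteq> c} = B" using Bsp unfolding \<xi>_def by (auto simp: indicator_def)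
    thus ?thesis using c by simp
  next
    case 2
    hence "{\<omega>\<in>space M. \<xi> \<omega> \<noteq> c} = space M - B" unfolding \<xi>_def by (auto simp: indicator_def)
    thus ?thesis using c V_compl[OF B] by simp
  next
    case 3
    hence "{\<omega>\<in>space M. \<xi> \<omega> \<noteq> c} = space M" unfolding \<xi>_def by (auto simp: indicator_def)
    thus ?thesis using c V_sp by simp
  qed
qed

lemma I_to_II:
  assumes cb: "cont_from_below M Vu" and th: "\<theta> \<in> measurable M M" and I: "ergodic_cap M Vu \<theta>"
    and xi: "\<xi> \<in> borel_measurable M" and inv: "\<forall>\<omega>\<in>space M. \<xi> (\<theta> \<omega>) = \<xi> \<omega>"
  shows "const_qs M Vu \<xi>"
proof (rule const_from_dich[OF cb xi])
  fix t
  define B where "B = {\<omega>\<in>space M. \<xi> \<omega> \<le> t}"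
  have Bs: "B \<in> sets M" unfolding B_def using xi by measurable
  have "\<theta> -` B \<inter> space M = B" unfolding B_def using inv measurable_space[OF th] by auto
  hence "Vu B = 0 \<or> Vu (space M - B) = 0" using I Bs unfolding ergodic_cap_def by blast
  moreover have "space M - B = {\<omega>\<in>space M. t < \<xi> \<omega>}" unfolding B_def by auto
  ultimately show "Vu {\<omega>\<in>space M. \<xi> \<omega> \<le> t} = 0 \<or> Vu {\<omega>\<in>space M. t < \<xi> \<omega>} = 0"
    unfolding B_def by simp
qed

lemma I_to_III:
  assumes cb: "cont_from_below M Vu" and th: "\<theta> \<in> measurable M M" and I: "ergodic_cap M Vu \<theta>"
    and pres: "preserves M Vu \<theta>"
    and xi: "\<xi> \<in> borel_measurable M" and qs: "quasi_surely M Vu (\<lambda>\<omega>. \<xi> (\<theta> \<omega>) = \<xi> \<omega>)"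
  shows "const_qs M Vu \<xi>"
proof -
  obtain N where N: "N \<in> sets M" "Vu N = 0" and NN: "\<And>\<omega>. \<omega> \<in> space M - N \<Longrightarrow> \<xi> (\<theta> \<omega>) = \<xi> \<omega>"
    using qs unfolding quasi_surely_def by blast
  define Nn where "Nn n = (\<theta>^^n) -` N \<inter> space M" for n
  have thn: "(\<theta>^^n) \<in> measurable M M" for n using th by (rule measurable_compose_n)
  have Nns: "Nn n \<in> sets M" for n unfolding Nn_def using measurable_sets[OF thn N(1)] .
  have Nnz: "Vu (Nn n) = 0" for n
  proof (induction n)
    case 0
    have "Nn 0 = N" unfolding Nn_def using N(1) sets.sets_into_space by auto
    then show ?case using N by simp
  next
    case (Suc n)
    have "Nn (Suc n) = \<theta> -` (Nn n) \<inter> space M" unfolding Nn_def using measurable_space[OF th]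
      by (auto simp del: funpow.simps simp: funpow_Suc_right)
    then show ?case using pres Nns Suc unfolding preserves_def by metis
  qed
  define N' where "N' = (\<Union>n. Nn n)"
  have N's: "N' \<in> sets M" unfolding N'_def using Nns by auto
  have N'z: "Vu N' = 0" unfolding N'_def using null_UN[OF cb, of Nn] Nns Nnz by auto
  have orb: "\<xi> ((\<theta>^^n) \<omega>) = \<xi> \<omega>" if "\<omega> \<in> space M - N'" for \<omega> n
  proof (induction n)
    case 0 then show ?case by simp
  next
    case (Suc n)
    have "(\<theta>^^n) \<omega> \<in> space M" using measurable_space[OF thn] that by auto
    moreover have "(\<theta>^^n) \<omega> \<notin> N" using that unfolding N'_def Nn_def by auto
    ultimately have "\<xi> (\<theta> ((\<theta>^^n) \<omega>)) = \<xi> ((\<theta>^^n) \<omega>)" using NN by auto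
    then show ?case using Suc by simp
  qed
  show ?thesis
  proof (rule const_from_dich[OF cb xi])
    fix t
    define B where "B = {\<omega>\<in>space M. \<exists>k. \<forall>n\<ge>k. \<xi> ((\<theta>^^n) \<omega>) \<le> t}"
    have Bs: "B \<in> sets M"
    proof -
      define C where "C k n = {\<omega>\<in>space M. k \<le> n \<longrightarrow> \<xi> ((\<theta>^^n) \<omega>) \<le> t}" for k n :: nat
      have m: "(\<lambda>\<omega>. \<xi> ((\<theta>^^n) \<omega>)) \<in> borel_measurable M" for n
        using measurable_compose[OF thn xi] by (simp add: comp_def)
      have Cs: "C k n \<in> sets M" for k n
      proof (cases "k \<le> n")
        case True
        have "(\<lambda>\<omega>. \<xi> ((\<theta>^^n) \<omega>)) -` {..t} \<inter> space M \<in> sets M" using measurable_sets[OF m[of n]] by simp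
        moreover have "{\<omega>\<in>space M. \<xi> ((\<theta>^^n) \<omega>) \<le> t} = (\<lambda>\<omega>. \<xi> ((\<theta>^^n) \<omega>)) -` {..t} \<inter> space M" by auto
        ultimately have "{\<omega>\<in>space M. \<xi> ((\<theta>^^n) \<omega>) \<le> t} \<in> sets M" by simp
        thus ?thesis unfolding C_def using True by simp
      next
        case False thus ?thesis unfolding C_def by simp
      qed
      have "B = (\<Union>k. \<Inter>n. C k n)" unfolding B_def C_def by (rule aux_set)
      moreover have "(\<Union>k. \<Inter>n. C k n) \<in> sets M"
        using Cs by (intro sets.countable_UN sets.countable_INT) auto
      ultimately show ?thesis by simp
    qed
    have "\<theta> -` B \<inter> space M = B"
    proof (intro set_eqI iffI)
      fix \<omega> assume "\<omega> \<in> \<theta> -` B \<inter> space M"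
      hence tw: "\<theta> \<omega> \<in> B" and sp: "\<omega> \<in> space M" by auto
      from tw obtain k where k: "\<forall>n\<ge>k. \<xi> ((\<theta>^^n) (\<theta> \<omega>)) \<le> t" unfolding B_def by blast
      have "\<forall>n\<ge>Suc k. \<xi> ((\<theta>^^n) \<omega>) \<le> t"
      proof (intro allI impI)
        fix n assume "Suc k \<le> n"
        then obtain m where m: "n = Suc m" "k \<le> m" by (cases n) auto
        have "(\<theta>^^n) \<omega> = (\<theta>^^m) (\<theta> \<omega>)" unfolding m by (simp del: funpow.simps add: funpow_Suc_right)
        thus "\<xi> ((\<theta>^^n) \<omega>) \<le> t" using k m by simp
      qed
      thus "\<omega> \<in> B" unfolding B_def using sp by blast
    next
      fix \<omega> assume "\<omega> \<in> B"
      then have sp: "\<omega> \<in> space M" and "\<exists>k. \<forall>n\<ge>k. \<xi> ((\<theta>^^n) \<omega>) \<le> t" unfolding B_def by blast+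
      then obtain k where k: "\<forall>n\<ge>k. \<xi> ((\<theta>^^n) \<omega>) \<le> t" by blast
      have "\<forall>n\<ge>k. \<xi> ((\<theta>^^n) (\<theta> \<omega>)) \<le> t"
      proof (intro allI impI)
        fix n assume "k \<le> n"
        have "(\<theta>^^(Suc n)) \<omega> = (\<theta>^^n) (\<theta> \<omega>)" by (simp del: funpow.simps add: funpow_Suc_right)
        thus "\<xi> ((\<theta>^^n) (\<theta> \<omega>)) \<le> t" using k \<open>k \<le> n\<close> by (metis le_SucI)
      qed
      moreover have "\<theta> \<omega> \<in> space M" using measurable_space[OF th sp] .
      ultimately have "\<theta> \<omega> \<in> B" unfolding B_def by blast
      thus "\<omega> \<in> \<theta> -` B \<inter> space M" using sp by simp
    qed
    hence dB: "Vu B = 0 \<or> Vu (space M - B) = 0" using I Bs unfolding ergodic_cap_def by (metis (no_types, lifting))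
    have L1: "{\<omega>\<in>space M. \<xi> \<omega> \<le> t} \<in> sets M" using xi by measurable
    have L2: "{\<omega>\<in>space M. t < \<xi> \<omega>} \<in> sets M" using xi by measurable
    note Ls = L1 L2
    have sub1: "{\<omega>\<in>space M. \<xi> \<omega> \<le> t} \<subseteq> B \<union> N'"
    proof
      fix \<omega> assume w: "\<omega> \<in> {\<omega>\<in>space M. \<xi> \<omega> \<le> t}"
      show "\<omega> \<in> B \<union> N'"
      proof (cases "\<omega> \<in> N'")
        case False
        have "\<forall>n\<ge>0. \<xi> ((\<theta>^^n) \<omega>) \<le> t" using orb[of \<omega>] w False by simp
        hence "\<omega> \<in> B" unfolding B_def using w by blast
        thus ?thesis by simp
      qed simp
    qed
    have sub2: "{\<omega>\<in>space M. t < \<xi> \<omega>} \<subseteq> (space M - B) \<union> N'"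
    proof
      fix \<omega> assume w: "\<omega> \<in> {\<omega>\<in>space M. t < \<xi> \<omega>}"
      show "\<omega> \<in> (space M - B) \<union> N'"
      proof (cases "\<omega> \<in> N'")
        case False
        show ?thesis
        proof (rule ccontr)
          assume "\<omega> \<notin> (space M - B) \<union> N'"
          hence "\<omega> \<in> B" using w by simp
          then obtain k where "\<forall>n\<ge>k. \<xi> ((\<theta>^^n) \<omega>) \<le> t" unfolding B_def by blast
          hence "\<xi> ((\<theta>^^k) \<omega>) \<le> t" by simp
          moreover have "\<xi> ((\<theta>^^k) \<omega>) = \<xi> \<omega>" using orb[of \<omega> k] w False by simp
          ultimately show False using w by simp
        qed
      qed auto
    qed
    from dB show "Vu {\<omega>\<in>space M. \<xi> \<omega> \<le> t} = 0 \<or> Vu {\<omega>\<in>space M. t < \<xi> \<omega>} = 0"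
    proof
      assume "Vu B = 0"
      hence "Vu (B \<union> N') = 0" using V_null_un[OF Bs N's] N'z by simp
      hence "Vu {\<omega>\<in>space M. \<xi> \<omega> \<le> t} = 0" using V_null_sub[OF Ls(1) _ sub1] sets.Un[OF Bs N's] by simp
      thus ?thesis by simp
    next
      assume "Vu (space M - B) = 0"
      have Cs: "space M - B \<in> sets M" using Bs by auto
      hence "Vu ((space M - B) \<union> N') = 0" using V_null_un[OF Cs N's] N'z \<open>Vu (space M - B) = 0\<close> by simp
      hence "Vu {\<omega>\<in>space M. t < \<xi> \<omega>} = 0" using V_null_sub[OF Ls(2) _ sub2] sets.Un[OF Cs N's] by simp
      thus ?thesis by simp
    qed
  qed
qed

end

theorem theorem5:
  fixes M :: "'a measure" and \<P> :: "('a set \<Rightarrow> real) set" and \<theta> :: "'a \<Rightarrow> 'a"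
  defines "V \<equiv> upper_prob \<P>"
  defines "I \<equiv> ergodic_cap M V \<theta>"
  defines "II \<equiv> (\<forall>\<xi> \<in> borel_measurable M. (\<exists>K. \<forall>\<omega>\<in>space M. \<bar>\<xi> \<omega>\<bar> \<le> K) \<longrightarrow>
                   (\<forall>\<omega>\<in>space M. \<xi> (\<theta> \<omega>) = \<xi> \<omega>) \<longrightarrow> const_qs M V \<xi>)"
  defines "III \<equiv> (\<forall>\<xi> \<in> borel_measurable M.
                   quasi_surely M V (\<lambda>\<omega>. \<xi> (\<theta> \<omega>) = \<xi> \<omega>) \<longrightarrow> const_qs M V \<xi>)"
  assumes "\<P> \<noteq> {}"
    and "\<forall>P\<in>\<P>. fa_prob M P"
    and "\<theta> \<in> measurable M M"
    and "preserves M V \<theta>"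
  shows "(III \<longrightarrow> II) \<and> (II \<longrightarrow> I)
         \<and> (cont_from_below M V \<longrightarrow> (II \<longleftrightarrow> I))
         \<and> (continuous_cap M V \<longrightarrow> (I \<longleftrightarrow> II) \<and> (II \<longleftrightarrow> III))"
proof -
  interpret UP M \<P> using assms(5,6) by unfold_locales
  have th: "\<theta> \<in> measurable M M" by fact
  have pres: "preserves M (upper_prob \<P>) \<theta>" using assms(8) unfolding V_def .
  have h32: "III \<longrightarrow> II"
  proof (intro impI)
    assume h: III
    have qs: "quasi_surely M V (\<lambda>\<omega>. \<xi> (\<theta> \<omega>) = \<xi> \<omega>)"
      if "\<forall>\<omega>\<in>space M. \<xi> (\<theta> \<omega>) = \<xi> \<omega>" for \<xi> :: "'a \<Rightarrow> real"
      unfolding quasi_surely_def V_def using that V_empty by (intro bexI[of _ "{}"]) auto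
    show II unfolding II_def using h qs unfolding III_def by blast
  qed
  have h21: "II \<longrightarrow> I"
    unfolding II_def I_def V_def using II_to_I by blast
  have h12: "cont_from_below M V \<Longrightarrow> I \<Longrightarrow> II"
    unfolding II_def I_def V_def using I_to_II[OF _ th] by blast
  have h23: "continuous_cap M V \<Longrightarrow> II \<Longrightarrow> III"
  proof -
    assume c: "continuous_cap M V" and h: II
    have cb: "cont_from_below M V" using c unfolding continuous_cap_def by blast
    have i: I using h h21 by blast
    show III unfolding III_def
      using I_to_III[OF cb[unfolded V_def] th i[unfolded I_def V_def] pres] unfolding V_def by blast
  qed
  show ?thesis using h32 h21 h12 h23 unfolding continuous_cap_def by blast
qed

end
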